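(* Consider the following TOPSIS procedure. Given $n$ alternatives $A_1,\dots,A_n$, $m$ attributes $\mathscr{O}_1,\dots,\mathscr{O}_m$ each classified as benefit or cost, an intuitionistic fuzzy decision matrix $R=(r_{ij})_{n\times m}$ with $r_{ij}=\langle\mu_{ij},\nu_{ij}\rangle\in\tilde{\mathbb{I}}$, real weights $\omega_1,\dots,\omega_m$ with $\omega_j\in(0,1]$ and $\sum_j\omega_j=1$, and a parameter $\lambda\ge1$: (i) normalize: $\bar r_{ij}=\langle\bar\mu_{ij},\bar\nu_{ij}\rangle=r_{ij}$ if $\mathscr{O}_j$ is a benefit attribute and $\bar r_{ij}=\langle\nu_{ij},\mu_{ij}\rangle$ if $\mathscr{O}_j$ is a cost attribute; (ii) ideal points: $\langle\mu_j^+,\nu_j^+\rangle=\langle\max_i\bar\mu_{ij},\min_i\bar\nu_{ij}\rangle$ and $\langle\mu_j^-,\nu_j^-\rangle=\langle\min_i\bar\mu_{ij},\max_i\bar\nu_{ij}\rangle$; (iii) $\mathbf{S}(A_i,\mathbf{A}^+)=1-\sum_{j=1}^m\omega_j\,\varrho^{(\lambda)}(\bar r_{ij},\langle\mu_j^+,\nu_j^+\rangle)$ and $\mathbf{S}(A_i,\mathbf{A}^-)=1-\sum_{j=1}^m\omega_j\,\varrho^{(\lambda)}(\bar r_{ij},\langle\mu_j^-,\nu_j^-\rangle)$; (iv) $\mathscr{C}_i=\frac{\mathbf{S}(A_i,\mathbf{A}^+)}{\mathbf{S}(A_i,\mathbf{A}^+)+\mathbf{S}(A_i,\mathbf{A}^-)}$.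 Then this procedure is increasing with the linear order $\le_{XY}$: if $1\le i_1,i_2\le n$ are such that $\bar r_{i_1j}\le_{XY}\bar r_{i_2j}$ for all $1\le j\le m$, then $\mathscr{C}_{i_1}\le\mathscr{C}_{i_2}$. In particular, it is increasing with Atanassov's order: if $\bar r_{i_1j}\subset\bar r_{i_2j}$ for all $j$, then $\mathscr{C}_{i_1}\le\mathscr{C}_{i_2}$.
   Context: $\tilde{\mathbb{I}}=\{\langle\mu,\nu\rangle\in[0,1]^2\mid\mu+\nu\le1\}$ (intuitionistic fuzzy values). For $\alpha=\langle\mu_\alpha,\nu_\alpha\rangle$: $s(\alpha)=\mu_\alpha-\nu_\alpha$, $h(\alpha)=\mu_\alpha+\nu_\alpha$. Order $\le_{XY}$: $\alpha<_{XY}\beta$ if $s(\alpha)<s(\beta)$, or $s(\alpha)=s(\beta)$ and $h(\alpha)<h(\beta)$; $\alpha\le_{XY}\beta$ means $\alpha<_{XY}\beta$ or $\alpha=\beta$. Atanassov's order: $\langle\mu_1,\nu_1\rangle\subset\langle\mu_2,\nu_2\rangle$ iff $\mu_1\le\mu_2$ and $\nu_1\ge\nu_2$. For $\lambda\ge1$, $\varrho^{(\lambda)}(\alpha,\beta)=\frac{1}{1+2\lambda}(1+\lambda|s(\alpha)-s(\beta)|)$ if $s(\alpha)\ne s(\beta)$ and $\varrho^{(\lambda)}(\alpha,\beta)=\frac{1}{1+2\lambda}|h(\alpha)-h(\beta)|$ if $s(\alpha)=s(\beta)$. *)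

theory Defs
  imports Main "HOL.Real"
begin

definition ifv_set :: "(real \<times> real) set" where
  "ifv_set = {(mu, nu). 0 \<le> mu \<and> mu \<le> 1 \<and> 0 \<le> nu \<and> nu \<le> 1 \<and> mu + nu \<le> 1}"

definition score :: "real \<times> real \<Rightarrow> real" where
  "score a = fst a - snd a"

definition accuracy :: "real \<times> real \<Rightarrow> real" where
  "accuracy a = fst a + snd a"

definition xy_less :: "real \<times> real \<Rightarrow> real \<times> real \<Rightarrow> bool" where
  "xy_less a b \<longleftrightarrow> score a < score b \<or> (score a = score b \<and> accuracy a < accuracy b)"

definition xy_le :: "real \<times> real \<Rightarrow> real \<times> real \<Rightarrow> bool" where
  "xy_le a b \<longleftrightarrow> xy_less a b \<or> a = b"

definition atanassov_le :: "real \<times> real \<Rightarrow> real \<times> real \<Rightarrow> bool" where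
  "atanassov_le a b \<longleftrightarrow> fst a \<le> fst b \<and> snd a \<ge> snd b"

definition rho :: "real \<Rightarrow> real \<times> real \<Rightarrow> real \<times> real \<Rightarrow> real" where
  "rho lam a b = (if score a \<noteq> score b
      then (1 + lam * \<bar>score a - score b\<bar>) / (1 + 2 * lam)
      else \<bar>accuracy a - accuracy b\<bar> / (1 + 2 * lam))"

text \<open>TOPSIS procedure. Alternatives are indexed by i < n, attributes by j < m (0-based).
  benefit j holds iff attribute j is a benefit attribute (otherwise cost).\<close>
definition normalize :: "(nat \<Rightarrow> bool) \<Rightarrow> (nat \<Rightarrow> nat \<Rightarrow> real \<times> real) \<Rightarrow> nat \<Rightarrow> nat \<Rightarrow> real \<times> real" where
  "normalize benefit r i j = (if benefit j then r i j else (snd (r i j), fst (r i j)))"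

definition pos_ideal :: "nat \<Rightarrow> (nat \<Rightarrow> bool) \<Rightarrow> (nat \<Rightarrow> nat \<Rightarrow> real \<times> real) \<Rightarrow> nat \<Rightarrow> real \<times> real" where
  "pos_ideal n benefit r j =
     (Max ((\<lambda>i. fst (normalize benefit r i j)) ` {..<n}),
      Min ((\<lambda>i. snd (normalize benefit r i j)) ` {..<n}))"

definition neg_ideal :: "nat \<Rightarrow> (nat \<Rightarrow> bool) \<Rightarrow> (nat \<Rightarrow> nat \<Rightarrow> real \<times> real) \<Rightarrow> nat \<Rightarrow> real \<times> real" where
  "neg_ideal n benefit r j =
     (Min ((\<lambda>i. fst (normalize benefit r i j)) ` {..<n}),
      Max ((\<lambda>i. snd (normalize benefit r i j)) ` {..<n}))"

definition S_pos :: "nat \<Rightarrow> nat \<Rightarrow> (nat \<Rightarrow> bool) \<Rightarrow> (nat \<Rightarrow> nat \<Rightarrow> real \<times> real) \<Rightarrow> (nat \<Rightarrow> real) \<Rightarrow> real \<Rightarrow> nat \<Rightarrow> real" where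
  "S_pos n m benefit r w lam i =
     1 - (\<Sum>j<m. w j * rho lam (normalize benefit r i j) (pos_ideal n benefit r j))"

definition S_neg :: "nat \<Rightarrow> nat \<Rightarrow> (nat \<Rightarrow> bool) \<Rightarrow> (nat \<Rightarrow> nat \<Rightarrow> real \<times> real) \<Rightarrow> (nat \<Rightarrow> real) \<Rightarrow> real \<Rightarrow> nat \<Rightarrow> real" where
  "S_neg n m benefit r w lam i =
     1 - (\<Sum>j<m. w j * rho lam (normalize benefit r i j) (neg_ideal n benefit r j))"

definition closeness :: "nat \<Rightarrow> nat \<Rightarrow> (nat \<Rightarrow> bool) \<Rightarrow> (nat \<Rightarrow> nat \<Rightarrow> real \<times> real) \<Rightarrow> (nat \<Rightarrow> real) \<Rightarrow> real \<Rightarrow> nat \<Rightarrow> real" where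
  "closeness n m benefit r w lam i =
     S_pos n m benefit r w lam i / (S_pos n m benefit r w lam i + S_neg n m benefit r w lam i)"

end

theory Submission
  imports Defs
begin

lemma rho_up:
  assumes "fst x \<le> fst p" "snd p \<le> snd x" "fst y \<le> fst p" "snd p \<le> snd y"
    "score x \<le> score y" "1 \<le> lam"
  shows "rho lam y p \<le> rho lam x p"
proof -
  have d: "0 < 1 + 2 * lam" using assms by simp
  have ey: "score y = score p \<Longrightarrow> y = p" using assms(3,4) unfolding score_def
    by (simp add: prod_eq_iff)
  have ex: "score x = score p \<Longrightarrow> x = p" using assms(1,2) unfolding score_def
    by (simp add: prod_eq_iff)
  have sy: "score y \<le> score p" "score x \<le> score p" using assms unfolding score_def by auto
  show ?thesis
  proof (cases "score y = score p")
    case True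
    then have "rho lam y p = 0" using ey by (simp add: rho_def)
    moreover have "0 \<le> rho lam x p" using d assms(6) by (auto simp: rho_def)
    ultimately show ?thesis by simp
  next
    case False
    then have "score x \<noteq> score p" using sy assms(5) by auto
    then have "rho lam x p = (1 + lam * (score p - score x)) / (1 + 2 * lam)"
      "rho lam y p = (1 + lam * (score p - score y)) / (1 + 2 * lam)"
      using False sy by (auto simp: rho_def abs_if)
    moreover have "lam * (score p - score y) \<le> lam * (score p - score x)"
      using assms(5,6) by (intro mult_left_mono) auto
    ultimately show ?thesis using d by (simp add: divide_right_mono)
  qed
qed

lemma rho_down:
  assumes "fst p \<le> fst x" "snd x \<le> snd p" "fst p \<le> fst y" "snd y \<le> snd p"
    "score x \<le> score y" "1 \<le> lam"
  shows "rho lam x p \<le> rho lam y p"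
proof -
  have d: "0 < 1 + 2 * lam" using assms by simp
  have ey: "score y = score p \<Longrightarrow> y = p" using assms(3,4) unfolding score_def
    by (simp add: prod_eq_iff)
  have ex: "score x = score p \<Longrightarrow> x = p" using assms(1,2) unfolding score_def
    by (simp add: prod_eq_iff)
  have sy: "score p \<le> score y" "score p \<le> score x" using assms unfolding score_def by auto
  show ?thesis
  proof (cases "score x = score p")
    case True
    then have "rho lam x p = 0" using ex by (simp add: rho_def)
    moreover have "0 \<le> rho lam y p" using d assms(6) by (auto simp: rho_def)
    ultimately show ?thesis by simp
  next
    case False
    then have "score y \<noteq> score p" using sy assms(5) by auto
    then have "rho lam x p = (1 + lam * (score x - score p)) / (1 + 2 * lam)"
      "rho lam y p = (1 + lam * (score y - score p)) / (1 + 2 * lam)"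
      using False sy by (auto simp: rho_def abs_if)
    moreover have "lam * (score x - score p) \<le> lam * (score y - score p)"
      using assms(5,6) by (intro mult_left_mono) auto
    ultimately show ?thesis using d by (simp add: divide_right_mono)
  qed
qed

lemma rho_bnd:
  assumes "0 \<le> fst x" "fst x \<le> 1" "0 \<le> snd x" "snd x \<le> 1"
    "0 \<le> fst p" "fst p \<le> 1" "0 \<le> snd p" "snd p \<le> 1" "1 \<le> lam"
  shows "0 \<le> rho lam x p \<and> rho lam x p \<le> 1"
proof -
  have d: "0 < 1 + 2 * lam" using assms by simp
  have a: "\<bar>score x - score p\<bar> \<le> 2" "\<bar>accuracy x - accuracy p\<bar> \<le> 2"
    using assms unfolding score_def accuracy_def by auto
  have "lam * \<bar>score x - score p\<bar> \<le> lam * 2" using a assms(9) by (intro mult_left_mono) auto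
  moreover have "\<bar>accuracy x - accuracy p\<bar> \<le> 1 + 2 * lam" using a assms(9) by auto
  moreover have "0 \<le> lam * \<bar>score x - score p\<bar>" using assms(9) by simp
  ultimately show ?thesis using d by (auto simp: rho_def divide_le_eq_1)
qed

lemma ratio_mono:
  fixes a b a' b' :: real
  assumes "0 \<le> a" "a \<le> a'" "0 \<le> b'" "b' \<le> b"
  shows "a / (a + b) \<le> a' / (a' + b')"
proof (cases "a = 0")
  case True
  then show ?thesis using assms by simp
next
  case False
  then have "0 < a" "0 < a'" "0 < a + b" "0 < a' + b'" using assms by auto
  moreover have "a * b' \<le> a' * b" using assms by (intro mult_mono) auto
  ultimately show ?thesis by (simp add: divide_simps algebra_simps)
qed

lemma main:
  fixes n m :: nat and benefit :: "nat \<Rightarrow> bool" and r :: "nat \<Rightarrow> nat \<Rightarrow> real \<times> real"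
    and w :: "nat \<Rightarrow> real" and lam :: real and i1 i2 :: nat
  assumes r_ifv: "\<forall>i<n. \<forall>j<m. r i j \<in> ifv_set"
    and w_range: "\<forall>j<m. 0 < w j \<and> w j \<le> 1"
    and w_sum: "(\<Sum>j<m. w j) = 1"
    and lam: "1 \<le> lam"
    and i1: "i1 < n" and i2: "i2 < n"
    and sc: "\<forall>j<m. score (normalize benefit r i1 j) \<le> score (normalize benefit r i2 j)"
  shows "closeness n m benefit r w lam i1 \<le> closeness n m benefit r w lam i2"
proof -
  define N where "N = normalize benefit r"
  define P where "P = pos_ideal n benefit r"
  define Q where "Q = neg_ideal n benefit r"
  have ne: "{..<n} \<noteq> {}" using i1 by auto
  have Nb: "0 \<le> fst (N i j) \<and> fst (N i j) \<le> 1 \<and> 0 \<le> snd (N i j) \<and> snd (N i j) \<le> 1"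
    if "i < n" "j < m" for i j
  proof -
    obtain a b where ab: "r i j = (a, b)" by fastforce
    have "r i j \<in> ifv_set" using r_ifv that by blast
    then have "0 \<le> a \<and> a \<le> 1 \<and> 0 \<le> b \<and> b \<le> 1" using ab unfolding ifv_set_def by auto
    then show ?thesis using ab unfolding N_def normalize_def by auto
  qed
  have fP: "fst (P j) = Max ((\<lambda>i. fst (N i j)) ` {..<n})" "snd (P j) = Min ((\<lambda>i. snd (N i j)) ` {..<n})"
    "fst (Q j) = Min ((\<lambda>i. fst (N i j)) ` {..<n})" "snd (Q j) = Max ((\<lambda>i. snd (N i j)) ` {..<n})"
    for j unfolding P_def Q_def N_def pos_ideal_def neg_ideal_def by auto
  have PQ: "fst (N i j) \<le> fst (P j) \<and> snd (P j) \<le> snd (N i j) \<and>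
            fst (Q j) \<le> fst (N i j) \<and> snd (N i j) \<le> snd (Q j)" if "i < n" for i j
    unfolding fP using that by auto
  have Pb: "0 \<le> fst (P j) \<and> fst (P j) \<le> 1 \<and> 0 \<le> snd (P j) \<and> snd (P j) \<le> 1 \<and>
            0 \<le> fst (Q j) \<and> fst (Q j) \<le> 1 \<and> 0 \<le> snd (Q j) \<and> snd (Q j) \<le> 1" if "j < m" for j
  proof -
    have "fst (P j) \<in> (\<lambda>i. fst (N i j)) ` {..<n}"
      unfolding fP by (rule Max_in) (use ne in auto)
    then obtain a where a: "a < n" "fst (P j) = fst (N a j)" by auto
    have "snd (P j) \<in> (\<lambda>i. snd (N i j)) ` {..<n}"
      unfolding fP by (rule Min_in) (use ne in auto)
    then obtain b where b: "b < n" "snd (P j) = snd (N b j)" by auto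
    have "fst (Q j) \<in> (\<lambda>i. fst (N i j)) ` {..<n}"
      unfolding fP by (rule Min_in) (use ne in auto)
    then obtain c where c: "c < n" "fst (Q j) = fst (N c j)" by auto
    have "snd (Q j) \<in> (\<lambda>i. snd (N i j)) ` {..<n}"
      unfolding fP by (rule Max_in) (use ne in auto)
    then obtain d where d: "d < n" "snd (Q j) = snd (N d j)" by auto
    show ?thesis using a b c d Nb[OF _ that] by metis
  qed
  have rb: "0 \<le> rho lam (N i j) (P j) \<and> rho lam (N i j) (P j) \<le> 1 \<and>
            0 \<le> rho lam (N i j) (Q j) \<and> rho lam (N i j) (Q j) \<le> 1" if "i < n" "j < m" for i j
    using rho_bnd[OF _ _ _ _ _ _ _ _ lam, of "N i j" "P j"] rho_bnd[OF _ _ _ _ _ _ _ _ lam, of "N i j" "Q j"]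
      Nb[OF that] Pb[OF that(2)] by blast
  have Sb: "0 \<le> 1 - (\<Sum>j<m. w j * rho lam (N i j) (P j)) \<and> 0 \<le> 1 - (\<Sum>j<m. w j * rho lam (N i j) (Q j))"
    if "i < n" for i
  proof -
    have "(\<Sum>j<m. w j * rho lam (N i j) (P j)) \<le> (\<Sum>j<m. w j)"
      by (rule sum_mono) (use rb[OF that] w_range in \<open>auto intro: mult_left_le\<close>)
    moreover have "(\<Sum>j<m. w j * rho lam (N i j) (Q j)) \<le> (\<Sum>j<m. w j)"
      by (rule sum_mono) (use rb[OF that] w_range in \<open>auto intro: mult_left_le\<close>)
    ultimately show ?thesis using w_sum by simp
  qed
  have m1: "(\<Sum>j<m. w j * rho lam (N i2 j) (P j)) \<le> (\<Sum>j<m. w j * rho lam (N i1 j) (P j))"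
  proof (rule sum_mono)
    fix j assume j: "j \<in> {..<m}"
    show "w j * rho lam (N i2 j) (P j) \<le> w j * rho lam (N i1 j) (P j)"
      using rho_up[of "N i1 j" "P j" "N i2 j" lam] PQ[OF i1, of j] PQ[OF i2, of j] sc j lam w_range
      unfolding N_def by (auto intro: mult_left_mono)
  qed
  have m2: "(\<Sum>j<m. w j * rho lam (N i1 j) (Q j)) \<le> (\<Sum>j<m. w j * rho lam (N i2 j) (Q j))"
  proof (rule sum_mono)
    fix j assume j: "j \<in> {..<m}"
    show "w j * rho lam (N i1 j) (Q j) \<le> w j * rho lam (N i2 j) (Q j)"
      using rho_down[of "Q j" "N i1 j" "N i2 j" lam] PQ[OF i1, of j] PQ[OF i2, of j] sc j lam w_range
      unfolding N_def by (auto intro: mult_left_mono)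
  qed
  show ?thesis
    unfolding closeness_def S_pos_def S_neg_def N_def[symmetric] P_def[symmetric] Q_def[symmetric]
    by (rule ratio_mono) (use Sb[OF i1] Sb[OF i2] m1 m2 in auto)
qed

theorem theorem6:
  fixes n m :: nat and benefit :: "nat \<Rightarrow> bool" and r :: "nat \<Rightarrow> nat \<Rightarrow> real \<times> real"
    and w :: "nat \<Rightarrow> real" and lam :: real and i1 i2 :: nat
  assumes r_ifv: "\<forall>i<n. \<forall>j<m. r i j \<in> ifv_set"
    and w_range: "\<forall>j<m. 0 < w j \<and> w j \<le> 1"
    and w_sum: "(\<Sum>j<m. w j) = 1"
    and lam: "1 \<le> lam"
    and i1: "i1 < n" and i2: "i2 < n"
  shows "((\<forall>j<m. xy_le (normalize benefit r i1 j) (normalize benefit r i2 j)) \<longrightarrow>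
           closeness n m benefit r w lam i1 \<le> closeness n m benefit r w lam i2) \<and>
         ((\<forall>j<m. atanassov_le (normalize benefit r i1 j) (normalize benefit r i2 j)) \<longrightarrow>
           closeness n m benefit r w lam i1 \<le> closeness n m benefit r w lam i2)"
proof (intro conjI impI)
  assume h: "\<forall>j<m. xy_le (normalize benefit r i1 j) (normalize benefit r i2 j)"
  show "closeness n m benefit r w lam i1 \<le> closeness n m benefit r w lam i2"
    by (rule main[OF assms]) (use h in \<open>auto simp: xy_le_def xy_less_def\<close>)
next
  assume h: "\<forall>j<m. atanassov_le (normalize benefit r i1 j) (normalize benefit r i2 j)"
  show "closeness n m benefit r w lam i1 \<le> closeness n m benefit r w lam i2"
    by (rule main[OF assms]) (use h in \<open>auto simp: atanassov_le_def score_def\<close>)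
qed

end
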